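(* Let $\mathbf{a}_1,\ldots,\mathbf{a}_m\in\mathbb{R}^d$ and let $\mathbf{y}\in\mathbb{R}^d$ lie in the convex hull of $\mathbf{a}_1,\ldots,\mathbf{a}_m$. Let $\mathbf{x}\in\mathbb{R}^m$ be a solution to the optimization problem $$\min_{\mathbf{x}\in\mathbb{R}^m}\ \sum_{j=1}^m x_j\|\mathbf{y}-\mathbf{a}_j\|^2\quad\text{subject to}\quad \mathbf{y}=\sum_{j=1}^m x_j\mathbf{a}_j,\quad \sum_{j=1}^m x_j=1,\quad x_j\ge 0\ \text{for all } j.$$ If the points $\mathbf{a}_1,\ldots,\mathbf{a}_m$ have a unique Delaunay triangulation, then the set of points $\{\mathbf{a}_j : x_j\neq 0\}$ comprises the vertices of some face of this triangulation that contains $\mathbf{y}$.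
   Context: $\|\cdot\|$ is the Euclidean norm. A Delaunay triangulation of $\mathbf{a}_1,\ldots,\mathbf{a}_m$ is a triangulation of their convex hull into simplices (cells) with vertices among the $\mathbf{a}_j$ such that the circumscribed sphere of each cell contains no point $\mathbf{a}_j$ in its interior; a face of the triangulation is a face of one of its cells. *)

theory Defs
  imports "HOL-Analysis.Analysis"
begin

text \<open>A cell of a triangulation of the finite point set A is given by its vertex set V:
  an affinely independent subset of A whose number of points is one more than the
  (affine) dimension of A, i.e. a full-dimensional simplex (relative to the affine hull of A;
  when A spans R^d this is an ordinary d-simplex).\<close>
definition is_cell :: "'a::euclidean_space set \<Rightarrow> 'a set \<Rightarrow> bool" where
  "is_cell A V \<longleftrightarrow> V \<subseteq> A \<and> \<not> affine_dependent V \<and> int (card V) = aff_dim A + 1"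

definition is_triangulation :: "'a::euclidean_space set \<Rightarrow> 'a set set \<Rightarrow> bool" where
  "is_triangulation A T \<longleftrightarrow>
     (\<forall>V\<in>T. is_cell A V) \<and>
     \<Union>((\<lambda>V. convex hull V) ` T) = convex hull A \<and>
     (\<forall>V\<in>T. \<forall>W\<in>T. convex hull V \<inter> convex hull W = convex hull (V \<inter> W))"

definition empty_circumsphere :: "'a::euclidean_space set \<Rightarrow> 'a set \<Rightarrow> bool" where
  "empty_circumsphere A V \<longleftrightarrow>
     (\<exists>c r. c \<in> affine hull V \<and> (\<forall>v\<in>V. dist c v = r) \<and> (\<forall>p\<in>A. r \<le> dist c p))"

definition is_delaunay_triangulation :: "'a::euclidean_space set \<Rightarrow> 'a set set \<Rightarrow> bool" where
  "is_delaunay_triangulation A T \<longleftrightarrow>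
     is_triangulation A T \<and> (\<forall>V\<in>T. empty_circumsphere A V)"

definition feasible_weights ::
  "nat \<Rightarrow> (nat \<Rightarrow> 'a::euclidean_space) \<Rightarrow> 'a \<Rightarrow> (nat \<Rightarrow> real) \<Rightarrow> bool" where
  "feasible_weights m a y x \<longleftrightarrow>
     y = (\<Sum>j=1..m. x j *\<^sub>R a j) \<and> (\<Sum>j=1..m. x j) = 1 \<and> (\<forall>j\<in>{1..m}. x j \<ge> 0)"

definition objective :: "nat \<Rightarrow> (nat \<Rightarrow> 'a::euclidean_space) \<Rightarrow> 'a \<Rightarrow> (nat \<Rightarrow> real) \<Rightarrow> real" where
  "objective m a y x = (\<Sum>j=1..m. x j * (norm (y - a j))\<^sup>2)"

definition is_optimal_weights ::
  "nat \<Rightarrow> (nat \<Rightarrow> 'a::euclidean_space) \<Rightarrow> 'a \<Rightarrow> (nat \<Rightarrow> real) \<Rightarrow> bool" where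
  "is_optimal_weights m a y x \<longleftrightarrow>
     feasible_weights m a y x \<and>
     (\<forall>x'. feasible_weights m a y x' \<longrightarrow> objective m a y x \<le> objective m a y x')"

end

theory Submission
  imports Defs "HOL-Computational_Algebra.Polynomial"
begin



definition bary :: "'a::euclidean_space set \<Rightarrow> 'a \<Rightarrow> 'a \<Rightarrow> real" where
  "bary U p = (SOME c. sum c U = 1 \<and> (\<Sum>u\<in>U. c u *\<^sub>R u) = p)"

lemma coeff_unique:
  fixes U :: "'a::euclidean_space set"
  assumes "\<not> affine_dependent U" "finite U" "sum c U = sum d U"
    "(\<Sum>u\<in>U. c u *\<^sub>R u) = (\<Sum>u\<in>U. d u *\<^sub>R u)" "u \<in> U"
  shows "c u = d u"
proof (rule ccontr)
  assume "c u \<noteq> d u"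
  have "sum (\<lambda>v. c v - d v) U = 0" using assms(3) by (simp add: sum_subtractf)
  moreover have "(\<Sum>v\<in>U. (c v - d v) *\<^sub>R v) = 0"
    using assms(4) by (simp add: scaleR_diff_left sum_subtractf)
  ultimately have "affine_dependent U"
    using affine_dependent_explicit_finite[OF assms(2)] \<open>c u \<noteq> d u\<close> assms(5)
    by (metis eq_iff_diff_eq_0)
  with assms(1) show False by simp
qed

lemma bary:
  fixes U :: "'a::euclidean_space set"
  assumes "finite U" "p \<in> affine hull U"
  shows "sum (bary U p) U = 1" "(\<Sum>u\<in>U. bary U p u *\<^sub>R u) = p"
proof -
  have "\<exists>c. sum c U = 1 \<and> (\<Sum>u\<in>U. c u *\<^sub>R u) = p"
    using assms affine_hull_finite by blast
  then have "sum (bary U p) U = 1 \<and> (\<Sum>u\<in>U. bary U p u *\<^sub>R u) = p"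
    unfolding bary_def by (rule someI_ex)
  then show "sum (bary U p) U = 1" "(\<Sum>u\<in>U. bary U p u *\<^sub>R u) = p" by auto
qed

lemma bary_eq:
  fixes U :: "'a::euclidean_space set"
  assumes "\<not> affine_dependent U" "finite U" "sum c U = 1"
    "(\<Sum>u\<in>U. c u *\<^sub>R u) = p" "u \<in> U"
  shows "bary U p u = c u"
proof -
  have p: "p \<in> affine hull U" using assms affine_hull_finite by blast
  show ?thesis
    using coeff_unique[OF assms(1,2), of "bary U p" c u] bary[OF assms(2) p] assms by simp
qed

lemma bary_vertex:
  fixes U :: "'a::euclidean_space set"
  assumes "\<not> affine_dependent U" "finite U" "v \<in> U" "u \<in> U"
  shows "bary U v u = (if u = v then 1 else 0)"
proof (rule bary_eq[OF assms(1,2)])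
  show "(\<Sum>u\<in>U. (if u = v then 1 else 0)) = (1::real)" using assms by (simp add: sum.delta')
  have "(\<Sum>u\<in>U. (if u = v then 1 else 0) *\<^sub>R u) = (\<Sum>u\<in>U. (if u = v then v else 0))"
    by (rule sum.cong) auto
  then show "(\<Sum>u\<in>U. (if u = v then 1 else 0) *\<^sub>R u) = v" using assms by (simp add: sum.delta')
qed (use assms in auto)

lemma bary_conv:
  fixes U :: "'a::euclidean_space set"
  assumes "\<not> affine_dependent U" "finite U" "z \<in> convex hull U" "u \<in> U"
  shows "bary U z u \<ge> 0"
proof -
  obtain c where c: "\<forall>x\<in>U. 0 \<le> c x" "sum c U = 1" "(\<Sum>x\<in>U. c x *\<^sub>R x) = z"
    using assms(3) convex_hull_finite[OF assms(2)] by blast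
  show ?thesis using bary_eq[OF assms(1,2) c(2,3) assms(4)] c(1) assms(4) by simp
qed

definition interp :: "('a::euclidean_space \<Rightarrow> real) \<Rightarrow> 'a set \<Rightarrow> 'a \<Rightarrow> real" where
  "interp h U p = (\<Sum>u\<in>U. bary U p u * h u)"

lemma interp_vertex:
  fixes U :: "'a::euclidean_space set"
  assumes "\<not> affine_dependent U" "finite U" "v \<in> U"
  shows "interp h U v = h v"
proof -
  have "interp h U v = (\<Sum>u\<in>U. (if u = v then h u else 0))"
    unfolding interp_def by (rule sum.cong) (auto simp: bary_vertex[OF assms])
  also have "\<dots> = h v" using assms by (simp add: sum.delta')
  finally show ?thesis .
qed

lemma bary_affine:
  fixes U :: "'a::euclidean_space set"
  assumes "\<not> affine_dependent U" "finite U" "finite I" "sum \<mu> I = 1"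
    "\<And>i. i \<in> I \<Longrightarrow> q i \<in> affine hull U" "u \<in> U"
  shows "bary U (\<Sum>i\<in>I. \<mu> i *\<^sub>R q i) u = (\<Sum>i\<in>I. \<mu> i * bary U (q i) u)"
proof (rule bary_eq[OF assms(1,2)])
  have "(\<Sum>u\<in>U. \<Sum>i\<in>I. \<mu> i * bary U (q i) u) = (\<Sum>i\<in>I. \<Sum>u\<in>U. \<mu> i * bary U (q i) u)"
    by (rule sum.swap)
  also have "\<dots> = (\<Sum>i\<in>I. \<mu> i)"
    using bary(1)[OF assms(2) assms(5)] by (simp add: sum_distrib_left[symmetric])
  finally show "(\<Sum>u\<in>U. \<Sum>i\<in>I. \<mu> i * bary U (q i) u) = 1" using assms(4) by simp
  have "(\<Sum>u\<in>U. (\<Sum>i\<in>I. \<mu> i * bary U (q i) u) *\<^sub>R u) = (\<Sum>i\<in>I. \<Sum>u\<in>U. \<mu> i *\<^sub>R (bary U (q i) u *\<^sub>R u))"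
    by (simp only: scaleR_sum_left scaleR_scaleR) (rule sum.swap)
  also have "\<dots> = (\<Sum>i\<in>I. \<mu> i *\<^sub>R q i)"
  proof (rule sum.cong[OF refl])
    fix i assume i: "i \<in> I"
    have "(\<Sum>u\<in>U. \<mu> i *\<^sub>R (bary U (q i) u *\<^sub>R u)) = \<mu> i *\<^sub>R (\<Sum>u\<in>U. bary U (q i) u *\<^sub>R u)"
      by (simp add: scaleR_sum_right)
    then show "(\<Sum>u\<in>U. \<mu> i *\<^sub>R (bary U (q i) u *\<^sub>R u)) = \<mu> i *\<^sub>R q i"
      using bary(2)[OF assms(2) assms(5)[OF i]] by simp
  qed
  finally show "(\<Sum>u\<in>U. (\<Sum>i\<in>I. \<mu> i * bary U (q i) u) *\<^sub>R u) = (\<Sum>i\<in>I. \<mu> i *\<^sub>R q i)" .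
qed (use assms in auto)

lemma interp_affine:
  fixes U :: "'a::euclidean_space set"
  assumes "\<not> affine_dependent U" "finite U" "finite I" "sum \<mu> I = 1"
    "\<And>i. i \<in> I \<Longrightarrow> q i \<in> affine hull U"
  shows "interp h U (\<Sum>i\<in>I. \<mu> i *\<^sub>R q i) = (\<Sum>i\<in>I. \<mu> i * interp h U (q i))"
proof -
  have "interp h U (\<Sum>i\<in>I. \<mu> i *\<^sub>R q i) = (\<Sum>u\<in>U. (\<Sum>i\<in>I. \<mu> i * bary U (q i) u) * h u)"
    unfolding interp_def by (rule sum.cong) (auto simp: bary_affine[OF assms])
  also have "\<dots> = (\<Sum>u\<in>U. \<Sum>i\<in>I. \<mu> i * (bary U (q i) u * h u))"
    by (simp add: sum_distrib_right mult.assoc)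
  also have "\<dots> = (\<Sum>i\<in>I. \<Sum>u\<in>U. \<mu> i * (bary U (q i) u * h u))"
    by (rule sum.swap)
  also have "\<dots> = (\<Sum>i\<in>I. \<mu> i * interp h U (q i))"
    unfolding interp_def by (simp add: sum_distrib_left)
  finally show ?thesis .
qed

lemma cell_basic:
  fixes A :: "'a::euclidean_space set"
  assumes "finite A" "is_cell A U"
  shows "finite U" "\<not> affine_dependent U" "U \<subseteq> A" "aff_dim U = aff_dim A"
    "affine hull U = affine hull A" "A \<subseteq> affine hull U"
proof -
  have c: "U \<subseteq> A \<and> \<not> affine_dependent U \<and> int (card U) = aff_dim A + 1"
    using assms(2) unfolding is_cell_def .
  then show U: "U \<subseteq> A" "\<not> affine_dependent U" by simp_all
  show "finite U" using finite_subset[OF U(1) assms(1)] .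
  show d: "aff_dim U = aff_dim A" using c aff_dim_affine_independent[OF U(2)] by linarith
  show h: "affine hull U = affine hull A" using iffD1[OF aff_dim_eq_full_gen[OF U(1)] d] .
  show "A \<subseteq> affine hull U" unfolding h by (rule hull_subset)
qed

definition lower :: "('a::euclidean_space \<Rightarrow> real) \<Rightarrow> 'a set \<Rightarrow> 'a set \<Rightarrow> bool" where
  "lower h A U \<longleftrightarrow> (\<forall>p\<in>A. interp h U p \<le> h p)"

definition generic :: "('a::euclidean_space \<Rightarrow> real) \<Rightarrow> 'a set \<Rightarrow> bool" where
  "generic h A \<longleftrightarrow> (\<forall>U. is_cell A U \<longrightarrow> (\<forall>p\<in>A - U. interp h U p \<noteq> h p))"

lemma interp_self_sum:
  fixes U :: "'a::euclidean_space set"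
  assumes "\<not> affine_dependent U" "finite U" "sum \<alpha> U = 1" "(\<Sum>u\<in>U. \<alpha> u *\<^sub>R u) = z"
  shows "interp h U z = (\<Sum>u\<in>U. \<alpha> u * h u)"
  unfolding interp_def by (rule sum.cong) (auto simp: bary_eq[OF assms])

lemma interp_other_sum:
  fixes U :: "'a::euclidean_space set"
  assumes "\<not> affine_dependent W" "finite W" "finite U" "sum \<alpha> U = 1"
    "(\<Sum>u\<in>U. \<alpha> u *\<^sub>R u) = z" "U \<subseteq> affine hull W"
  shows "(\<Sum>u\<in>U. \<alpha> u * interp h W u) = interp h W z"
proof -
  have "interp h W (\<Sum>u\<in>U. \<alpha> u *\<^sub>R id u) = (\<Sum>u\<in>U. \<alpha> u * interp h W (id u))"
    by (rule interp_affine[OF assms(1,2,3,4)]) (use assms(6) in auto)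
  then show ?thesis using assms(5) by simp
qed

lemma cell_inter:
  fixes A :: "'a::euclidean_space set"
  assumes A: "finite A" and gen: "generic h A" and U: "is_cell A U" "lower h A U"
    and W: "is_cell A W" "lower h A W"
  shows "convex hull U \<inter> convex hull W = convex hull (U \<inter> W)"
proof
  show "convex hull (U \<inter> W) \<subseteq> convex hull U \<inter> convex hull W"
    by (simp add: hull_mono)
next
  note Ub = cell_basic[OF A U(1)] and Wb = cell_basic[OF A W(1)]
  show "convex hull U \<inter> convex hull W \<subseteq> convex hull (U \<inter> W)"
  proof
    fix z assume z: "z \<in> convex hull U \<inter> convex hull W"
    have zU: "z \<in> affine hull U" using z convex_hull_subset_affine_hull[of U] by auto
    have zW: "z \<in> affine hull W" using z convex_hull_subset_affine_hull[of W] by auto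
    define \<alpha> where "\<alpha> = bary U z"
    define \<beta> where "\<beta> = bary W z"
    have a1: "sum \<alpha> U = 1" "(\<Sum>u\<in>U. \<alpha> u *\<^sub>R u) = z" using bary[OF Ub(1) zU] \<alpha>_def by auto
    have b1: "sum \<beta> W = 1" "(\<Sum>u\<in>W. \<beta> u *\<^sub>R u) = z" using bary[OF Wb(1) zW] \<beta>_def by auto
    have a0: "\<And>u. u \<in> U \<Longrightarrow> \<alpha> u \<ge> 0" unfolding \<alpha>_def using z by (simp add: bary_conv[OF Ub(2,1)])
    have b0: "\<And>u. u \<in> W \<Longrightarrow> \<beta> u \<ge> 0" unfolding \<beta>_def using z by (simp add: bary_conv[OF Wb(2,1)])
    have S1: "(\<Sum>u\<in>U. \<alpha> u * (h u - interp h W u)) = interp h U z - interp h W z"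
    proof -
      have "(\<Sum>u\<in>U. \<alpha> u * (h u - interp h W u)) = (\<Sum>u\<in>U. \<alpha> u * h u) - (\<Sum>u\<in>U. \<alpha> u * interp h W u)"
        by (simp add: right_diff_distrib sum_subtractf)
      also have "\<dots> = interp h U z - interp h W z"
        using interp_self_sum[OF Ub(2,1) a1] interp_other_sum[OF Wb(2,1) Ub(1) a1] Ub(3) Wb(6) by auto
      finally show ?thesis .
    qed
    have S2: "(\<Sum>u\<in>W. \<beta> u * (h u - interp h U u)) = interp h W z - interp h U z"
    proof -
      have "(\<Sum>u\<in>W. \<beta> u * (h u - interp h U u)) = (\<Sum>u\<in>W. \<beta> u * h u) - (\<Sum>u\<in>W. \<beta> u * interp h U u)"
        by (simp add: right_diff_distrib sum_subtractf)
      also have "\<dots> = interp h W z - interp h U z"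
        using interp_self_sum[OF Wb(2,1) b1] interp_other_sum[OF Ub(2,1) Wb(1) b1] Wb(3) Ub(6) by auto
      finally show ?thesis .
    qed
    have n1: "\<forall>u\<in>U. 0 \<le> \<alpha> u * (h u - interp h W u)"
      using a0 W(2) Ub(3) unfolding lower_def by auto
    have n2: "\<forall>u\<in>W. 0 \<le> \<beta> u * (h u - interp h U u)"
      using b0 U(2) Wb(3) unfolding lower_def by auto
    have "(\<Sum>u\<in>U. \<alpha> u * (h u - interp h W u)) = 0"
    proof -
      have "0 \<le> (\<Sum>u\<in>U. \<alpha> u * (h u - interp h W u))" using n1 by (intro sum_nonneg) auto
      moreover have "0 \<le> (\<Sum>u\<in>W. \<beta> u * (h u - interp h U u))" using n2 by (intro sum_nonneg) auto
      ultimately show ?thesis using S1 S2 by linarith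
    qed
    then have t0: "\<forall>u\<in>U. \<alpha> u * (h u - interp h W u) = 0"
      by (subst (asm) sum_nonneg_eq_0_iff[OF Ub(1)]) (use n1 in auto)
    have supp: "\<And>u. u \<in> U \<Longrightarrow> \<alpha> u \<noteq> 0 \<Longrightarrow> u \<in> W"
    proof (rule ccontr)
      fix u assume u: "u \<in> U" "\<alpha> u \<noteq> 0" "u \<notin> W"
      then have "h u - interp h W u = 0" using t0 by auto
      moreover have "interp h W u \<noteq> h u" using gen W(1) u Ub(3) unfolding generic_def by auto
      ultimately show False by simp
    qed
    have e1: "sum \<alpha> (U \<inter> W) = sum \<alpha> U"
      by (rule sum.mono_neutral_left[OF Ub(1)]) (use supp in auto)
    have e2: "(\<Sum>u\<in>U \<inter> W. \<alpha> u *\<^sub>R u) = (\<Sum>u\<in>U. \<alpha> u *\<^sub>R u)"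
      by (rule sum.mono_neutral_left[OF Ub(1)]) (use supp in auto)
    have fin: "finite (U \<inter> W)" using Ub(1) by simp
    show "z \<in> convex hull (U \<inter> W)"
      unfolding convex_hull_finite[OF fin]
      using e1 e2 a1 a0 by (intro CollectI exI[of _ \<alpha>]) auto
  qed
qed

lemma affine_fun_sum:
  fixes q :: "'i \<Rightarrow> 'a::euclidean_space"
  assumes "sum \<mu> I = 1"
  shows "(\<Sum>i\<in>I. \<mu> i * (2 * (c \<bullet> q i) + K)) = 2 * (c \<bullet> (\<Sum>i\<in>I. \<mu> i *\<^sub>R q i)) + K"
proof -
  have "(\<Sum>i\<in>I. \<mu> i * (2 * (c \<bullet> q i) + K)) = (\<Sum>i\<in>I. 2 * (\<mu> i * (c \<bullet> q i)) + \<mu> i * K)"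
    by (rule sum.cong) (auto simp: algebra_simps)
  also have "\<dots> = 2 * (\<Sum>i\<in>I. \<mu> i * (c \<bullet> q i)) + sum \<mu> I * K"
    by (simp only: sum.distrib sum_distrib_left sum_distrib_right)
  also have "(\<Sum>i\<in>I. \<mu> i * (c \<bullet> q i)) = c \<bullet> (\<Sum>i\<in>I. \<mu> i *\<^sub>R q i)"
    by (simp add: inner_sum_right)
  finally show ?thesis using assms by simp
qed

lemma sq_dist_affine:
  fixes c p :: "'a::euclidean_space"
  shows "(norm p)\<^sup>2 - ((dist c p)\<^sup>2 - r\<^sup>2) = 2 * (c \<bullet> p) + (r\<^sup>2 - c \<bullet> c)"
  by (simp add: dist_norm power2_norm_eq_inner inner_diff_left inner_diff_right inner_commute algebra_simps)

lemma cell_card_pos: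
  fixes A :: "'a::euclidean_space set"
  assumes "A \<noteq> {}" "is_cell A U"
  shows "card U > 0"
proof -
  have "aff_dim A \<noteq> -1" using assms(1) aff_dim_empty[of A] by simp
  then have "aff_dim A \<ge> 0" using aff_dim_geq[of A] by linarith
  then show ?thesis using assms(2) unfolding is_cell_def by linarith
qed

lemma lowerN_sphere:
  fixes A :: "'a::euclidean_space set"
  assumes A: "finite A" "A \<noteq> {}" and U: "is_cell A U" "lower (\<lambda>p. (norm p)\<^sup>2) A U"
    and cov: "\<And>z. z \<in> convex hull A \<Longrightarrow> \<exists>V. is_cell A V \<and> empty_circumsphere A V \<and> z \<in> convex hull V"
  shows "empty_circumsphere A U"
proof -
  note Ub = cell_basic[OF A(1) U(1)]
  define N where "N = (\<lambda>p::'a. (norm p)\<^sup>2)"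
  have cU: "card U > 0" by (rule cell_card_pos[OF A(2) U(1)])
  define \<alpha> where "\<alpha> = (\<lambda>u::'a. 1 / real (card U))"
  define z where "z = (\<Sum>u\<in>U. \<alpha> u *\<^sub>R u)"
  have a1: "sum \<alpha> U = 1" using cU by (simp add: \<alpha>_def)
  have a0: "\<And>u. \<alpha> u > 0" using cU by (simp add: \<alpha>_def)
  have zc: "z \<in> convex hull U"
    unfolding convex_hull_finite[OF Ub(1)] z_def using a1 a0 by (intro CollectI exI[of _ \<alpha>]) (auto intro: less_imp_le)
  have zA: "z \<in> convex hull A" using hull_mono[OF Ub(3), of convex] zc by auto
  obtain V where V: "is_cell A V" "empty_circumsphere A V" "z \<in> convex hull V" using cov[OF zA] by auto
  note Vb = cell_basic[OF A(1) V(1)]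
  obtain c r where cr: "c \<in> affine hull V" "\<forall>v\<in>V. dist c v = r" "\<forall>p\<in>A. r \<le> dist c p"
    using V(2) unfolding empty_circumsphere_def by auto
  obtain \<beta> where \<beta>: "\<forall>v\<in>V. 0 \<le> \<beta> v" "sum \<beta> V = 1" "(\<Sum>v\<in>V. \<beta> v *\<^sub>R v) = z"
    using V(3) unfolding convex_hull_finite[OF Vb(1)] by auto
  have "card V > 0" by (rule cell_card_pos[OF A(2) V(1)])
  then obtain v0 where "v0 \<in> V" by (metis card_gt_0_iff ex_in_conv)
  then have r0: "r \<ge> 0" using cr(2) by (metis zero_le_dist)
  define g where "g = (\<lambda>p. (dist c p)\<^sup>2 - r\<^sup>2)"
  define K where "K = r\<^sup>2 - c \<bullet> c"
  have ell: "\<And>p. N p - g p = 2 * (c \<bullet> p) + K"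
    unfolding N_def g_def K_def by (rule sq_dist_affine)
  have g0: "\<And>p. p \<in> A \<Longrightarrow> g p \<ge> 0"
  proof -
    fix p assume "p \<in> A"
    then have "r \<le> dist c p" using cr(3) by auto
    then have "r\<^sup>2 \<le> (dist c p)\<^sup>2" using r0 by (simp add: power_mono)
    then show "g p \<ge> 0" unfolding g_def by simp
  qed
  have gV: "\<And>v. v \<in> V \<Longrightarrow> g v = 0" unfolding g_def using cr(2) by simp
  have S1: "(\<Sum>u\<in>U. \<alpha> u * g u) = interp N U z - (2 * (c \<bullet> z) + K)"
  proof -
    have "(\<Sum>u\<in>U. \<alpha> u * g u) = (\<Sum>u\<in>U. \<alpha> u * N u) - (\<Sum>u\<in>U. \<alpha> u * (N u - g u))"
      by (simp add: right_diff_distrib sum_subtractf)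
    also have "(\<Sum>u\<in>U. \<alpha> u * (N u - g u)) = (\<Sum>u\<in>U. \<alpha> u * (2 * (c \<bullet> id u) + K))"
      using ell by simp
    also have "\<dots> = 2 * (c \<bullet> z) + K"
      using affine_fun_sum[OF a1, of c id K] z_def by simp
    also have "(\<Sum>u\<in>U. \<alpha> u * N u) = interp N U z"
      using interp_self_sum[OF Ub(2,1) a1 z_def[symmetric]] by simp
    finally show ?thesis .
  qed
  have S2: "(\<Sum>v\<in>V. \<beta> v * (N v - interp N U v)) = (2 * (c \<bullet> z) + K) - interp N U z"
  proof -
    have "(\<Sum>v\<in>V. \<beta> v * (N v - interp N U v)) = (\<Sum>v\<in>V. \<beta> v * N v) - (\<Sum>v\<in>V. \<beta> v * interp N U v)"
      by (simp add: right_diff_distrib sum_subtractf)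
    also have "(\<Sum>v\<in>V. \<beta> v * N v) = (\<Sum>v\<in>V. \<beta> v * (2 * (c \<bullet> id v) + K))"
    proof (rule sum.cong[OF refl])
      fix v assume v: "v \<in> V"
      have "N v = 2 * (c \<bullet> v) + K" using ell[of v] gV[OF v] by simp
      then show "\<beta> v * N v = \<beta> v * (2 * (c \<bullet> id v) + K)" by simp
    qed
    also have "\<dots> = 2 * (c \<bullet> z) + K"
      using affine_fun_sum[OF \<beta>(2), of c id K] \<beta>(3) by simp
    also have "(\<Sum>v\<in>V. \<beta> v * interp N U v) = interp N U z"
      by (rule interp_other_sum[OF Ub(2,1) Vb(1) \<beta>(2,3)]) (use Vb(3) Ub(6) in auto)
    finally show ?thesis .
  qed
  have n1: "\<forall>u\<in>U. 0 \<le> \<alpha> u * g u"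
  proof
    fix u assume "u \<in> U"
    then have "0 \<le> g u" using g0 Ub(3) by auto
    then show "0 \<le> \<alpha> u * g u" using a0[of u] by simp
  qed
  have n2: "\<forall>v\<in>V. 0 \<le> \<beta> v * (N v - interp N U v)"
    using \<beta>(1) U(2) Vb(3) unfolding lower_def N_def by auto
  have "(\<Sum>u\<in>U. \<alpha> u * g u) = 0"
  proof -
    have "0 \<le> (\<Sum>u\<in>U. \<alpha> u * g u)" using n1 by (intro sum_nonneg) auto
    moreover have "0 \<le> (\<Sum>v\<in>V. \<beta> v * (N v - interp N U v))" using n2 by (intro sum_nonneg) auto
    ultimately show ?thesis using S1 S2 by linarith
  qed
  then have t0: "\<forall>u\<in>U. \<alpha> u * g u = 0"
    by (subst (asm) sum_nonneg_eq_0_iff[OF Ub(1)]) (use n1 in auto)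
  have onS: "\<forall>u\<in>U. dist c u = r"
  proof
    fix u assume u: "u \<in> U"
    then have "\<alpha> u * g u = 0" using t0 by blast
    then have "g u = 0" using a0[of u] by simp
    then have "(dist c u)\<^sup>2 = r\<^sup>2" unfolding g_def by simp
    then show "dist c u = r" using r0 by simp
  qed
  have "c \<in> affine hull U" using cr(1) Ub(5) Vb(5) by simp
  then show ?thesis unfolding empty_circumsphere_def using onS cr(3) by blast
qed

lemma line_affine:
  fixes z1 d :: "'a::real_vector"
  assumes "affine C" "z1 + s1 *\<^sub>R d \<in> C" "z1 + s2 *\<^sub>R d \<in> C" "s1 \<noteq> s2"
  shows "z1 + s *\<^sub>R d \<in> C"
proof -
  define l where "l = (s - s1) / (s2 - s1)"
  have e1: "(1 - l) *\<^sub>R (z1 + s1 *\<^sub>R d) + l *\<^sub>R (z1 + s2 *\<^sub>R d) = z1 + ((1 - l) * s1 + l * s2) *\<^sub>R d"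
    by (simp add: algebra_simps)
  have e3: "l * (s2 - s1) = s - s1" using assms(4) unfolding l_def by simp
  have e2: "(1 - l) * s1 + l * s2 = s"
  proof -
    have "(1 - l) * s1 + l * s2 = s1 + l * (s2 - s1)" by (simp add: algebra_simps)
    then show ?thesis using e3 by simp
  qed
  have "(1 - l) *\<^sub>R (z1 + s1 *\<^sub>R d) + l *\<^sub>R (z1 + s2 *\<^sub>R d) \<in> C"
    using assms(1,2,3) unfolding affine_alt by blast
  then show ?thesis using e1 e2 by simp
qed

lemma avoid_affine:
  fixes S :: "'a::euclidean_space set"
  assumes S: "convex S" "S \<noteq> {}" and F: "finite F" "\<forall>B\<in>F. affine B \<and> aff_dim B < aff_dim S"
  shows "\<exists>z\<in>S. \<forall>B\<in>F. z \<notin> B"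
  using F
proof (induction F rule: finite_induct)
  case empty
  then show ?case using S(2) by auto
next
  case (insert B F)
  then obtain z1 where z1: "z1 \<in> S" "\<forall>C\<in>F. z1 \<notin> C" by auto
  show ?case
  proof (cases "z1 \<in> B")
    case False
    then show ?thesis using z1 by auto
  next
    case True
    have Bi: "affine B" "aff_dim B < aff_dim S" using insert.prems by auto
    have "\<not> S \<subseteq> B"
    proof
      assume "S \<subseteq> B"
      then have "aff_dim S \<le> aff_dim B" by (rule aff_dim_subset)
      then show False using Bi by simp
    qed
    then obtain z2 where z2: "z2 \<in> S" "z2 \<notin> B" by auto
    define w where "w = (\<lambda>s::real. z1 + s *\<^sub>R (z2 - z1))"
    have w01: "w 0 = z1" "w 1 = z2" unfolding w_def by simp_all
    have one: "finite {s. w s \<in> C}" if C: "C \<in> insert B F" for C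
    proof (cases "{s. w s \<in> C} = {}")
      case True then show ?thesis by simp
    next
      case False
      then obtain s0 where s0: "w s0 \<in> C" by auto
      have aC: "affine C" using C insert.prems by auto
      have "{s. w s \<in> C} \<subseteq> {s0}"
      proof
        fix s assume s: "s \<in> {s. w s \<in> C}"
        show "s \<in> {s0}"
        proof (rule ccontr)
          assume "s \<notin> {s0}"
          then have ne: "s \<noteq> s0" by simp
          have all: "\<And>t. w t \<in> C"
            using line_affine[OF aC, of z1 s "z2 - z1" s0] s s0 ne unfolding w_def by auto
          have "z1 \<in> C" "z2 \<in> C" using all[of 0] all[of 1] w01 by auto
          then show False using C z1(2) z2(2) by auto
        qed
      qed
      then show ?thesis using finite_subset by blast
    qed
    define Bad where "Bad = (\<Union>C\<in>insert B F. {s. w s \<in> C})"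
    have fB: "finite Bad" unfolding Bad_def using insert.hyps(1) one by blast
    have "infinite ({0<..1::real} - Bad)" using Diff_infinite_finite[OF fB] by simp
    then obtain s where s: "s \<in> {0<..1::real}" "s \<notin> Bad" by (metis Diff_iff finite.emptyI ex_in_conv)
    have ws: "w s = (1 - s) *\<^sub>R z1 + s *\<^sub>R z2" unfolding w_def by (simp add: algebra_simps)
    have "w s \<in> S" unfolding ws using S(1) z1(1) z2(1) s(1) unfolding convex_alt by auto
    moreover have "\<forall>C\<in>insert B F. w s \<notin> C" using s(2) unfolding Bad_def by auto
    ultimately show ?thesis by blast
  qed
qed

lemma pivot_cover:
  fixes A :: "'a::euclidean_space set"
  assumes A: "finite A" and zA: "\<forall>B. B \<subseteq> A \<and> aff_dim B < aff_dim A \<longrightarrow> z \<notin> affine hull B"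
    and ex: "\<exists>U. is_cell A U \<and> z \<in> convex hull U"
  shows "\<exists>U. is_cell A U \<and> lower h A U \<and> z \<in> convex hull U"
proof -
  define C where "C = {U. is_cell A U \<and> z \<in> convex hull U}"
  have "C \<subseteq> Pow A" unfolding C_def is_cell_def by auto
  then have finC: "finite C" using A by (simp add: finite_subset)
  have neC: "C \<noteq> {}" using ex unfolding C_def by auto
  define U where "U = arg_min_on (\<lambda>U. interp h U z) C"
  have UC: "U \<in> C" and Umin: "\<not> (\<exists>U'\<in>C. interp h U' z < interp h U z)"
    using arg_min_if_finite[OF finC neC, of "\<lambda>U. interp h U z"] unfolding U_def by auto
  have Uc: "is_cell A U" "z \<in> convex hull U" using UC unfolding C_def by auto
  note Ub = cell_basic[OF A Uc(1)]
  show ?thesis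
  proof (cases "lower h A U")
    case True
    then show ?thesis using Uc by blast
  next
    case False
    then obtain p where p: "p \<in> A" "interp h U p > h p" unfolding lower_def by (auto simp: not_le)
    have pU: "p \<notin> U"
    proof
      assume "p \<in> U"
      then have "interp h U p = h p" by (rule interp_vertex[OF Ub(2,1)])
      then show False using p(2) by simp
    qed
    define b where "b = bary U p"
    define \<alpha> where "\<alpha> = bary U z"
    have pH: "p \<in> affine hull U" using Ub(6) p(1) by auto
    have zH: "z \<in> affine hull U" using Uc(2) convex_hull_subset_affine_hull[of U] by auto
    have b1: "sum b U = 1" "(\<Sum>u\<in>U. b u *\<^sub>R u) = p" using bary[OF Ub(1) pH] unfolding b_def by auto
    have a1: "sum \<alpha> U = 1" "(\<Sum>u\<in>U. \<alpha> u *\<^sub>R u) = z" using bary[OF Ub(1) zH] unfolding \<alpha>_def by auto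
    have a0: "\<And>u. u \<in> U \<Longrightarrow> \<alpha> u \<ge> 0" unfolding \<alpha>_def using Uc(2) by (simp add: bary_conv[OF Ub(2,1)])
    have cardU: "int (card U) = aff_dim A + 1" using Uc(1) unfolding is_cell_def by simp
    have apos: "\<alpha> u > 0" if u: "u \<in> U" for u
    proof (rule ccontr)
      assume "\<not> \<alpha> u > 0"
      then have au: "\<alpha> u = 0" using a0[OF u] by simp
      have s1: "sum \<alpha> (U - {u}) = 1" using a1(1) au u Ub(1) by (simp add: sum_diff1)
      have s2: "(\<Sum>v\<in>U - {u}. \<alpha> v *\<^sub>R v) = z" using a1(2) au u Ub(1) by (simp add: sum_diff1)
      have "z \<in> affine hull (U - {u})"
        unfolding affine_hull_finite[OF finite_Diff[OF Ub(1)]] using s1 s2 by blast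
      moreover have "U - {u} \<subseteq> A" using Ub(3) by auto
      moreover have "aff_dim (U - {u}) < aff_dim A"
      proof -
        have ind: "\<not> affine_dependent (U - {u})" using affine_independent_subset[OF Ub(2)] by auto
        have "int (card (U - {u})) = aff_dim (U - {u}) + 1" using aff_dim_affine_independent[OF ind] by simp
        moreover have "card (U - {u}) = card U - 1" using u by simp
        moreover have "card U > 0" using u Ub(1) card_gt_0_iff by blast
        ultimately show ?thesis using cardU by linarith
      qed
      ultimately show False using zA by blast
    qed
    define P where "P = {u\<in>U. b u > 0}"
    have finP: "finite P" unfolding P_def using Ub(1) by simp
    have neP: "P \<noteq> {}"
    proof
      assume "P = {}"
      then have "\<forall>u\<in>U. b u \<le> 0" unfolding P_def by auto
      then have "sum b U \<le> 0" by (intro sum_nonpos) auto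
      then show False using b1(1) by simp
    qed
    define u' where "u' = arg_min_on (\<lambda>u. \<alpha> u / b u) P"
    have u'P: "u' \<in> P" and u'min: "\<not> (\<exists>u\<in>P. \<alpha> u / b u < \<alpha> u' / b u')"
      using arg_min_if_finite[OF finP neP, of "\<lambda>u. \<alpha> u / b u"] unfolding u'_def by auto
    have u'U: "u' \<in> U" and bu': "b u' > 0" using u'P unfolding P_def by auto
    define t where "t = \<alpha> u' / b u'"
    have tpos: "t > 0" unfolding t_def using apos[OF u'U] bu' by simp
    have tu': "t * b u' = \<alpha> u'" unfolding t_def using bu' by simp
    have tb: "t * b u \<le> \<alpha> u" if u: "u \<in> U" for u
    proof (cases "b u > 0")
      case True
      then have "u \<in> P" unfolding P_def using u by simp
      then have "t \<le> \<alpha> u / b u" using u'min unfolding t_def by (simp add: not_less)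
      then show ?thesis using True by (simp add: le_divide_eq)
    next
      case False
      then have "t * b u \<le> 0" using tpos by (simp add: mult_nonneg_nonpos)
      then show ?thesis using a0[OF u] by simp
    qed
    define U' where "U' = insert p (U - {u'})"
    define \<alpha>' where "\<alpha>' = (\<lambda>v. if v = p then t else \<alpha> v - t * b v)"
    have finU': "finite U'" unfolding U'_def using Ub(1) by simp
    have U'A: "U' \<subseteq> A" unfolding U'_def using Ub(3) p(1) by auto
    have pnot: "p \<notin> U - {u'}" using pU by simp
    have cardU': "card U' = card U"
    proof -
      have "card U' = Suc (card (U - {u'}))" unfolding U'_def using pnot Ub(1) by simp
      moreover have "card (U - {u'}) = card U - 1" using u'U by simp
      moreover have "card U > 0" using u'U Ub(1) card_gt_0_iff by blast
      ultimately show ?thesis by simp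
    qed
    have sumdiff: "\<And>f::'a \<Rightarrow> real. sum f (U - {u'}) = sum f U - f u'"
      using u'U Ub(1) by (simp add: sum_diff1)
    have vsumdiff: "\<And>f::'a \<Rightarrow> 'a. sum f (U - {u'}) = sum f U - f u'"
      using u'U Ub(1) by (simp add: sum_diff1)
    have eqrest: "\<And>f. (\<Sum>v\<in>U - {u'}. f (\<alpha>' v) v) = (\<Sum>v\<in>U - {u'}. f (\<alpha> v - t * b v) v)"
      by (rule sum.cong) (use pU in \<open>auto simp: \<alpha>'_def\<close>)
    have s\<alpha>': "sum \<alpha>' U' = 1"
    proof -
      have "sum \<alpha>' U' = t + sum \<alpha>' (U - {u'})"
        unfolding U'_def using pnot Ub(1) by (simp add: \<alpha>'_def)
      also have "sum \<alpha>' (U - {u'}) = (\<Sum>v\<in>U - {u'}. \<alpha> v - t * b v)"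
        using eqrest[of "\<lambda>a v. a"] by simp
      also have "\<dots> = (sum \<alpha> U - \<alpha> u') - t * (sum b U - b u')"
        by (simp add: sum_subtractf sum_distrib_left[symmetric] sumdiff)
      finally show ?thesis using a1(1) b1(1) tu' by (simp add: algebra_simps)
    qed
    have v\<alpha>': "(\<Sum>v\<in>U'. \<alpha>' v *\<^sub>R v) = z"
    proof -
      have "(\<Sum>v\<in>U'. \<alpha>' v *\<^sub>R v) = t *\<^sub>R p + (\<Sum>v\<in>U - {u'}. \<alpha>' v *\<^sub>R v)"
        unfolding U'_def using pnot Ub(1) by (simp add: \<alpha>'_def)
      also have "(\<Sum>v\<in>U - {u'}. \<alpha>' v *\<^sub>R v) = (\<Sum>v\<in>U - {u'}. (\<alpha> v - t * b v) *\<^sub>R v)"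
        using eqrest[of "\<lambda>a v. a *\<^sub>R v"] by simp
      also have "\<dots> = (\<Sum>v\<in>U - {u'}. \<alpha> v *\<^sub>R v) - t *\<^sub>R (\<Sum>v\<in>U - {u'}. b v *\<^sub>R v)"
        by (simp add: scaleR_diff_left sum_subtractf scaleR_sum_right)
      also have "\<dots> = (z - \<alpha> u' *\<^sub>R u') - t *\<^sub>R (p - b u' *\<^sub>R u')"
        using vsumdiff[of "\<lambda>v. \<alpha> v *\<^sub>R v"] vsumdiff[of "\<lambda>v. b v *\<^sub>R v"] a1(2) b1(2) by simp
      also have "t *\<^sub>R (p - b u' *\<^sub>R u') = t *\<^sub>R p - \<alpha> u' *\<^sub>R u'"
        using tu' by (simp add: scaleR_diff_right)
      finally show ?thesis by simp
    qed
    have a0': "\<forall>v\<in>U'. 0 \<le> \<alpha>' v"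
    proof
      fix v assume "v \<in> U'"
      then have "v = p \<or> v \<in> U" unfolding U'_def by auto
      then show "0 \<le> \<alpha>' v" unfolding \<alpha>'_def using tpos tb by auto
    qed
    have zU': "z \<in> convex hull U'"
      unfolding convex_hull_finite[OF finU'] using a0' s\<alpha>' v\<alpha>' by blast
    define \<gamma> where "\<gamma> = (\<lambda>v. if v = p then 1 / b u' else - b v / b u')"
    have u'H: "u' \<in> affine hull U'"
    proof -
      have eqr: "\<And>f. (\<Sum>v\<in>U - {u'}. f (\<gamma> v) v) = (\<Sum>v\<in>U - {u'}. f (- b v / b u') v)"
        by (rule sum.cong) (use pU in \<open>auto simp: \<gamma>_def\<close>)
      have "sum \<gamma> U' = 1 / b u' + sum \<gamma> (U - {u'})"
        unfolding U'_def using pnot Ub(1) by (simp add: \<gamma>_def)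
      also have "sum \<gamma> (U - {u'}) = (\<Sum>v\<in>U - {u'}. - b v / b u')"
        using eqr[of "\<lambda>a v. a"] by simp
      also have "\<dots> = - ((sum b U - b u') / b u')"
        by (simp add: sum_negf sum_divide_distrib[symmetric] sumdiff)
      also have "\<dots> = (b u' - sum b U) / b u'"
        by (simp add: minus_divide_left)
      finally have g1: "sum \<gamma> U' = 1" using b1(1) bu' by (simp add: field_simps)
      have "(\<Sum>v\<in>U'. \<gamma> v *\<^sub>R v) = (1 / b u') *\<^sub>R p + (\<Sum>v\<in>U - {u'}. \<gamma> v *\<^sub>R v)"
        unfolding U'_def using pnot Ub(1) by (simp add: \<gamma>_def)
      also have "(\<Sum>v\<in>U - {u'}. \<gamma> v *\<^sub>R v) = (\<Sum>v\<in>U - {u'}. (- b v / b u') *\<^sub>R v)"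
        using eqr[of "\<lambda>a v. a *\<^sub>R v"] by simp
      also have "\<dots> = - (1 / b u') *\<^sub>R (\<Sum>v\<in>U - {u'}. b v *\<^sub>R v)"
        by (simp add: scaleR_sum_right sum_negf divide_inverse mult.commute)
      also have "\<dots> = - (1 / b u') *\<^sub>R (p - b u' *\<^sub>R u')"
        using vsumdiff[of "\<lambda>v. b v *\<^sub>R v"] b1(2) by simp
      finally have "(\<Sum>v\<in>U'. \<gamma> v *\<^sub>R v) = u'"
        using bu' by (simp add: scaleR_diff_right)
      then show ?thesis unfolding affine_hull_finite[OF finU'] using g1 by blast
    qed
    have "U \<subseteq> affine hull U'"
    proof
      fix v assume "v \<in> U"
      then show "v \<in> affine hull U'"
      proof (cases "v = u'")
        case True then show ?thesis using u'H by simp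
      next
        case False
        then have "v \<in> U'" unfolding U'_def using \<open>v \<in> U\<close> by simp
        then show ?thesis using hull_subset[of U' affine] by blast
      qed
    qed
    then have "affine hull U \<subseteq> affine hull U'" by (simp add: hull_minimal)
    then have "aff_dim (affine hull U) \<le> aff_dim (affine hull U')" by (rule aff_dim_subset)
    then have d1: "aff_dim A \<le> aff_dim U'" using Ub(4) by simp
    have d2: "aff_dim U' \<le> aff_dim A" by (rule aff_dim_subset[OF U'A])
    have indU': "\<not> affine_dependent U'"
      unfolding affine_independent_iff_card using finU' d1 d2 cardU' cardU by simp
    have cellU': "is_cell A U'" unfolding is_cell_def using U'A indU' cardU' cardU by simp
    have U'C: "U' \<in> C" unfolding C_def using cellU' zU' by simp
    have "interp h U' z = (\<Sum>v\<in>U'. \<alpha>' v * h v)" by (rule interp_self_sum[OF indU' finU' s\<alpha>' v\<alpha>'])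
    also have "\<dots> = t * h p + (\<Sum>v\<in>U - {u'}. \<alpha>' v * h v)"
      unfolding U'_def using pnot Ub(1) by (simp add: \<alpha>'_def)
    also have "(\<Sum>v\<in>U - {u'}. \<alpha>' v * h v) = (\<Sum>v\<in>U - {u'}. (\<alpha> v - t * b v) * h v)"
      using eqrest[of "\<lambda>a v. a * h v"] by simp
    also have "\<dots> = (\<Sum>v\<in>U - {u'}. \<alpha> v * h v) - t * (\<Sum>v\<in>U - {u'}. b v * h v)"
      by (simp add: left_diff_distrib sum_subtractf sum_distrib_left mult.assoc)
    also have "\<dots> = (interp h U z - \<alpha> u' * h u') - t * (interp h U p - b u' * h u')"
      using sumdiff[of "\<lambda>v. \<alpha> v * h v"] sumdiff[of "\<lambda>v. b v * h v"]
        interp_self_sum[OF Ub(2,1) a1] unfolding interp_def b_def by simp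
    moreover have "t * (b u' * h u') = \<alpha> u' * h u'" using tu' by (metis mult.assoc)
    ultimately have "interp h U' z = interp h U z + t * (h p - interp h U p)"
      by (simp add: algebra_simps)
    moreover have "t * (h p - interp h U p) < 0" using tpos p(2) by (simp add: mult_pos_neg)
    ultimately have "interp h U' z < interp h U z" by simp
    then show ?thesis using Umin U'C by blast
  qed
qed

lemma regular_cover:
  fixes A :: "'a::euclidean_space set"
  assumes A: "finite A" "A \<noteq> {}"
    and ex: "\<And>z. z \<in> convex hull A \<Longrightarrow> \<exists>U. is_cell A U \<and> z \<in> convex hull U"
  shows "convex hull A \<subseteq> (\<Union>U\<in>{U. is_cell A U \<and> lower h A U}. convex hull U)"
proof
  fix z assume z: "z \<in> convex hull A"
  define T where "T = {U. is_cell A U \<and> lower h A U}"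
  define X where "X = (\<Union>U\<in>T. convex hull U)"
  have "T \<subseteq> Pow A" unfolding T_def is_cell_def by auto
  then have finT: "finite T" using A(1) by (simp add: finite_subset)
  have clX: "closed X" unfolding X_def
  proof (rule closed_UN[OF finT], rule ballI)
    fix U assume "U \<in> T"
    then have "finite U" using cell_basic(1)[OF A(1)] unfolding T_def by auto
    then show "closed (convex hull U)"
      by (simp add: compact_imp_closed compact_convex_hull finite_imp_compact)
  qed
  have "z \<in> closure X"
    unfolding closure_approachable
  proof (intro allI impI)
    fix e :: real assume e: "e > 0"
    define S where "S = convex hull A \<inter> ball z e"
    have cS: "convex S" unfolding S_def by (simp add: convex_Int convex_ball)
    have zS: "z \<in> S" unfolding S_def using z e by simp
    have dS: "aff_dim S = aff_dim A"
    proof -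
      have "convex hull A \<inter> ball z e \<noteq> {}" using z e by auto
      then show ?thesis
        unfolding S_def using aff_dim_convex_Int_open[of "convex hull A" "ball z e"]
          aff_dim_convex_hull[of A] by simp
    qed
    define F where "F = (\<lambda>B. affine hull B) ` {B. B \<subseteq> A \<and> aff_dim B < aff_dim A}"
    have finF: "finite F" unfolding F_def using A(1) by simp
    have Fp: "\<forall>B\<in>F. affine B \<and> aff_dim B < aff_dim S" unfolding F_def dS by auto
    obtain z' where z': "z' \<in> S" "\<forall>B\<in>F. z' \<notin> B"
      using avoid_affine[OF cS _ finF Fp] zS by blast
    have gen: "\<forall>B. B \<subseteq> A \<and> aff_dim B < aff_dim A \<longrightarrow> z' \<notin> affine hull B"
      using z'(2) unfolding F_def by auto
    have z'A: "z' \<in> convex hull A" using z'(1) unfolding S_def by simp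
    obtain U where U: "is_cell A U" "lower h A U" "z' \<in> convex hull U"
      using pivot_cover[OF A(1) gen ex[OF z'A]] by blast
    have "z' \<in> X" unfolding X_def T_def using U by blast
    moreover have "dist z' z < e" using z'(1) unfolding S_def by (simp add: dist_commute)
    ultimately show "\<exists>y\<in>X. dist y z < e" by blast
  qed
  then show "z \<in> (\<Union>U\<in>{U. is_cell A U \<and> lower h A U}. convex hull U)"
    using clX unfolding X_def T_def by simp
qed

lemma regular_delaunay:
  fixes A :: "'a::euclidean_space set"
  assumes A: "finite A" "A \<noteq> {}" and gen: "generic h A"
    and low: "\<And>U. is_cell A U \<Longrightarrow> lower h A U \<Longrightarrow> lower (\<lambda>p. (norm p)\<^sup>2) A U"
    and T0: "is_delaunay_triangulation A T0"
  shows "is_delaunay_triangulation A {U. is_cell A U \<and> lower h A U}"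
proof -
  have T0c: "\<forall>V\<in>T0. is_cell A V" and T0u: "\<Union>((\<lambda>V. convex hull V) ` T0) = convex hull A"
    and T0e: "\<forall>V\<in>T0. empty_circumsphere A V"
    using T0 unfolding is_delaunay_triangulation_def is_triangulation_def by auto
  have cov0: "\<exists>V. is_cell A V \<and> empty_circumsphere A V \<and> z \<in> convex hull V" if "z \<in> convex hull A" for z
  proof -
    have "z \<in> \<Union>((\<lambda>V. convex hull V) ` T0)" using that T0u by simp
    then obtain V where "V \<in> T0" "z \<in> convex hull V" by auto
    then show ?thesis using T0c T0e by blast
  qed
  have cov1: "\<And>z. z \<in> convex hull A \<Longrightarrow> \<exists>U. is_cell A U \<and> z \<in> convex hull U"
    using cov0 by blast
  let ?T = "{U. is_cell A U \<and> lower h A U}"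
  have un: "\<Union>((\<lambda>V. convex hull V) ` ?T) = convex hull A"
  proof
    show "\<Union>((\<lambda>V. convex hull V) ` ?T) \<subseteq> convex hull A"
    proof
      fix z assume "z \<in> \<Union>((\<lambda>V. convex hull V) ` ?T)"
      then obtain U where U: "is_cell A U" "z \<in> convex hull U" by auto
      have "U \<subseteq> A" using U(1) unfolding is_cell_def by simp
      then have "convex hull U \<subseteq> convex hull A" by (rule hull_mono)
      then show "z \<in> convex hull A" using U(2) by auto
    qed
    show "convex hull A \<subseteq> \<Union>((\<lambda>V. convex hull V) ` ?T)"
      using regular_cover[OF A cov1] by simp
  qed
  have int: "\<forall>V\<in>?T. \<forall>W\<in>?T. convex hull V \<inter> convex hull W = convex hull (V \<inter> W)"
    using cell_inter[OF A(1) gen] by auto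
  have emp: "\<forall>V\<in>?T. empty_circumsphere A V"
    using lowerN_sphere[OF A _ _ cov0] low by auto
  show ?thesis unfolding is_delaunay_triangulation_def is_triangulation_def
    using un int emp by auto
qed

lemma exists_generic:
  fixes A :: "'a::euclidean_space set"
  assumes A: "finite A"
  shows "\<exists>f. \<forall>U. is_cell A U \<longrightarrow> (\<forall>p\<in>A - U. interp f U p - f p \<noteq> 0)"
proof -
  obtain \<sigma> :: "'a \<Rightarrow> nat" and n where \<sigma>: "\<sigma> ` A = {i. i < n}" "inj_on \<sigma> A"
    using finite_imp_inj_to_nat_seg[OF A] by blast
  define Pairs where "Pairs = {(U, p). is_cell A U \<and> p \<in> A - U}"
  have "Pairs \<subseteq> Pow A \<times> A" unfolding Pairs_def is_cell_def by auto
  then have finPairs: "finite Pairs" using A by (simp add: finite_subset)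
  define P :: "'a set \<times> 'a \<Rightarrow> real poly" where
    "P = (\<lambda>(U, p). (\<Sum>u\<in>U. smult (bary U p u) (monom 1 (\<sigma> u))) - monom 1 (\<sigma> p))"
  have Pnz: "P x \<noteq> 0" if x: "x \<in> Pairs" for x
  proof -
    obtain U p where xe: "x = (U, p)" and U: "is_cell A U" "p \<in> A" "p \<notin> U"
      using x unfolding Pairs_def by auto
    have UA: "U \<subseteq> A" using U(1) unfolding is_cell_def by simp
    have ne: "\<And>u. u \<in> U \<Longrightarrow> \<sigma> u \<noteq> \<sigma> p"
      using \<sigma>(2) U(2,3) UA unfolding inj_on_def by blast
    have "coeff (P x) (\<sigma> p) = (\<Sum>u\<in>U. bary U p u * (if \<sigma> u = \<sigma> p then 1 else 0)) - 1"
      unfolding xe P_def by (simp add: coeff_sum coeff_monom)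
    also have "(\<Sum>u\<in>U. bary U p u * (if \<sigma> u = \<sigma> p then 1 else 0)) = 0"
      by (rule sum.neutral) (use ne in auto)
    finally have "coeff (P x) (\<sigma> p) = -1" by simp
    then show ?thesis by auto
  qed
  define Bad where "Bad = (\<Union>x\<in>Pairs. {t. poly (P x) t = 0})"
  have "finite Bad" unfolding Bad_def
  proof (rule finite_UN_I[OF finPairs])
    fix x assume "x \<in> Pairs"
    show "finite {t. poly (P x) t = 0}" using poly_roots_finite[OF Pnz[OF \<open>x \<in> Pairs\<close>]] .
  qed
  then obtain t :: real where t: "t \<notin> Bad" using ex_new_if_finite[OF infinite_UNIV_char_0] by blast
  define f where "f = (\<lambda>q. t ^ \<sigma> q)"
  show ?thesis
  proof (intro exI[of _ f] allI impI ballI)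
    fix U p assume U: "is_cell A U" and p: "p \<in> A - U"
    then have x: "(U, p) \<in> Pairs" unfolding Pairs_def by auto
    have "poly (P (U, p)) t = interp f U p - f p"
      unfolding P_def interp_def f_def by (simp add: poly_sum poly_monom)
    moreover have "poly (P (U, p)) t \<noteq> 0" using t x unfolding Bad_def by blast
    ultimately show "interp f U p - f p \<noteq> 0" by simp
  qed
qed

lemma exists_eps:
  fixes c0 c1 :: "'b \<Rightarrow> real"
  assumes X: "finite X" and Y: "\<forall>x\<in>X. x \<in> Y \<longrightarrow> c1 x \<noteq> 0"
  shows "\<exists>e>0. \<forall>x\<in>X. (x \<in> Y \<longrightarrow> c0 x + e * c1 x \<noteq> 0 \<and> c0 x + (-e) * c1 x \<noteq> 0) \<and>
                      (c0 x > 0 \<longrightarrow> c0 x + e * c1 x > 0 \<and> c0 x + (-e) * c1 x > 0)"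
proof -
  have one: "\<forall>\<^sub>F e in at_right (0::real). (x \<in> Y \<longrightarrow> c0 x + e * c1 x \<noteq> 0 \<and> c0 x + (-e) * c1 x \<noteq> 0) \<and>
                      (c0 x > 0 \<longrightarrow> c0 x + e * c1 x > 0 \<and> c0 x + (-e) * c1 x > 0)" if x: "x \<in> X" for x
  proof -
    have L1: "((\<lambda>e. c0 x + e * c1 x) \<longlongrightarrow> c0 x + 0 * c1 x) (at_right 0)"
      by (intro tendsto_intros)
    have L2: "((\<lambda>e. c0 x + (-e) * c1 x) \<longlongrightarrow> c0 x + (-0) * c1 x) (at_right 0)"
      by (intro tendsto_intros)
    have pos: "\<forall>\<^sub>F e in at_right (0::real). 0 < e" by (rule eventually_at_right_less)
    have E1: "\<forall>\<^sub>F e in at_right (0::real). x \<in> Y \<longrightarrow> c0 x + e * c1 x \<noteq> 0 \<and> c0 x + (-e) * c1 x \<noteq> 0"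
    proof (cases "c0 x = 0")
      case True
      show ?thesis using pos
      proof (rule eventually_mono)
        fix e :: real assume "0 < e"
        then show "x \<in> Y \<longrightarrow> c0 x + e * c1 x \<noteq> 0 \<and> c0 x + (-e) * c1 x \<noteq> 0"
          using True Y x by auto
      qed
    next
      case False
      have "\<forall>\<^sub>F e in at_right (0::real). c0 x + e * c1 x \<noteq> 0"
        using tendsto_imp_eventually_ne[OF L1, of 0] False by simp
      moreover have "\<forall>\<^sub>F e in at_right (0::real). c0 x + (-e) * c1 x \<noteq> 0"
        using tendsto_imp_eventually_ne[OF L2, of 0] False by simp
      ultimately show ?thesis by eventually_elim auto
    qed
    have E2: "\<forall>\<^sub>F e in at_right (0::real). c0 x > 0 \<longrightarrow> c0 x + e * c1 x > 0 \<and> c0 x + (-e) * c1 x > 0"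
    proof (cases "c0 x > 0")
      case True
      have "\<forall>\<^sub>F e in at_right (0::real). 0 < c0 x + e * c1 x"
        using order_tendstoD(1)[OF L1, of 0] True by simp
      moreover have "\<forall>\<^sub>F e in at_right (0::real). 0 < c0 x + (-e) * c1 x"
        using order_tendstoD(1)[OF L2, of 0] True by simp
      ultimately show ?thesis by eventually_elim auto
    next
      case False
      then show ?thesis by simp
    qed
    show ?thesis using E1 E2 by eventually_elim auto
  qed
  have "\<forall>\<^sub>F e in at_right (0::real). 0 < e \<and> (\<forall>x\<in>X. (x \<in> Y \<longrightarrow> c0 x + e * c1 x \<noteq> 0 \<and> c0 x + (-e) * c1 x \<noteq> 0) \<and>
                      (c0 x > 0 \<longrightarrow> c0 x + e * c1 x > 0 \<and> c0 x + (-e) * c1 x > 0))"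
    using eventually_at_right_less eventually_ball_finite[OF X ballI[OF one]] by (rule eventually_conj)
  from eventually_happens[OF this] show ?thesis by simp
qed

lemma interp_lin:
  "interp (\<lambda>q. g q + s * f q) U p = interp g U p + s * interp f U p"
  unfolding interp_def by (simp add: distrib_left sum.distrib sum_distrib_left mult.left_commute)

lemma sum_reindex_support:
  fixes w :: "nat \<Rightarrow> 'b::comm_monoid_add"
  assumes "J \<subseteq> {1..m}" "inj_on idx V" "J = idx ` V"
  shows "(\<Sum>j\<in>{1..m}. if j \<in> J then w j else 0) = (\<Sum>v\<in>V. w (idx v))"
proof -
  have "(\<Sum>j\<in>{1..m}. if j \<in> J then w j else 0) = sum w ({1..m} \<inter> J)"
    by (rule sum.inter_restrict[symmetric]) simp
  also have "{1..m} \<inter> J = J" using assms(1) by blast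
  also have "sum w J = (\<Sum>v\<in>V. w (idx v))" unfolding assms(3) using sum.reindex[OF assms(2)] by simp
  finally show ?thesis .
qed

theorem theorem2:
  fixes m :: nat and a :: "nat \<Rightarrow> 'a::euclidean_space" and y :: 'a and x :: "nat \<Rightarrow> real"
  assumes "y \<in> convex hull (a ` {1..m})"
    and "is_optimal_weights m a y x"
    and "\<exists>!T. is_delaunay_triangulation (a ` {1..m}) T"
  shows "\<exists>T V F. is_delaunay_triangulation (a ` {1..m}) T \<and> V \<in> T \<and>
           F face_of convex hull V \<and> y \<in> F \<and>
           {v. v extreme_point_of F} = {a j | j. j \<in> {1..m} \<and> x j \<noteq> 0}"
proof -
  define A where "A = a ` {1..m}"
  have finA: "finite A" unfolding A_def by simp
  have yA: "y \<in> convex hull A" using assms(1) unfolding A_def .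
  have neA: "A \<noteq> {}" using yA by auto
  obtain T0 where T0: "is_delaunay_triangulation A T0"
    and uniq: "\<And>T. is_delaunay_triangulation A T \<Longrightarrow> T = T0"
    using assms(3) unfolding A_def by blast
  have T0c: "\<forall>V\<in>T0. is_cell A V" and T0u: "\<Union>((\<lambda>V. convex hull V) ` T0) = convex hull A"
    and T0e: "\<forall>V\<in>T0. empty_circumsphere A V"
    using T0 unfolding is_delaunay_triangulation_def is_triangulation_def by auto
  have "y \<in> \<Union>((\<lambda>V. convex hull V) ` T0)" using yA T0u by simp
  then obtain V where V: "V \<in> T0" "y \<in> convex hull V" by auto
  have Vc: "is_cell A V" using T0c V(1) by simp
  note Vb = cell_basic[OF finA Vc]
  have "empty_circumsphere A V" using T0e V(1) by blast
  then obtain c r where cr: "c \<in> affine hull V" "\<forall>v\<in>V. dist c v = r" "\<forall>p\<in>A. r \<le> dist c p"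
    unfolding empty_circumsphere_def by blast
  have "card V > 0" by (rule cell_card_pos[OF neA Vc])
  then obtain v0 where "v0 \<in> V" by (metis card_gt_0_iff ex_in_conv)
  then have r0: "r \<ge> 0" using cr(2) by (metis zero_le_dist)
  have xf: "feasible_weights m a y x" and xopt: "\<And>x'. feasible_weights m a y x' \<Longrightarrow> objective m a y x \<le> objective m a y x'"
    using assms(2) unfolding is_optimal_weights_def by auto
  have xf1: "y = (\<Sum>j=1..m. x j *\<^sub>R a j)" "(\<Sum>j=1..m. x j) = 1" "\<forall>j\<in>{1..m}. x j \<ge> 0"
    using xf unfolding feasible_weights_def by auto
  define G where "G = (\<lambda>p. (dist c p)\<^sup>2)"
  have ident: "objective m a y x' = (\<Sum>j=1..m. x' j * G (a j)) - (dist c y)\<^sup>2"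
    if fx: "feasible_weights m a y x'" for x'
  proof -
    have f1: "y = (\<Sum>j=1..m. x' j *\<^sub>R a j)" "(\<Sum>j=1..m. x' j) = 1"
      using fx unfolding feasible_weights_def by auto
    have pj: "\<And>p. (norm (y - p))\<^sup>2 = G p + (2 * ((c - y) \<bullet> p) + (y \<bullet> y - c \<bullet> c))"
      unfolding G_def by (simp add: dist_norm power2_norm_eq_inner inner_diff_left inner_diff_right inner_commute algebra_simps)
    have "objective m a y x' = (\<Sum>j=1..m. x' j * G (a j) + x' j * (2 * ((c - y) \<bullet> a j) + (y \<bullet> y - c \<bullet> c)))"
      unfolding objective_def by (rule sum.cong) (auto simp: pj distrib_left)
    also have "\<dots> = (\<Sum>j=1..m. x' j * G (a j)) + (\<Sum>j=1..m. x' j * (2 * ((c - y) \<bullet> a j) + (y \<bullet> y - c \<bullet> c)))"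
      by (rule sum.distrib)
    also have "(\<Sum>j=1..m. x' j * (2 * ((c - y) \<bullet> a j) + (y \<bullet> y - c \<bullet> c))) = 2 * ((c - y) \<bullet> y) + (y \<bullet> y - c \<bullet> c)"
      using affine_fun_sum[OF f1(2), of "c - y" a "y \<bullet> y - c \<bullet> c"] f1(1) by simp
    also have "2 * ((c - y) \<bullet> y) + (y \<bullet> y - c \<bullet> c) = - (dist c y)\<^sup>2"
      by (simp add: dist_norm power2_norm_eq_inner inner_diff_left inner_diff_right inner_commute algebra_simps)
    finally show ?thesis by simp
  qed
  define idx where "idx = inv_into {1..m} a"
  define J where "J = idx ` V"
  have VA: "V \<subseteq> a ` {1..m}" using Vb(3) unfolding A_def .
  have idx1: "\<And>v. v \<in> V \<Longrightarrow> idx v \<in> {1..m}" unfolding idx_def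
    by (rule inv_into_into) (use VA in blast)
  have idx2: "\<And>v. v \<in> V \<Longrightarrow> a (idx v) = v" unfolding idx_def
    by (rule f_inv_into_f) (use VA in blast)
  have injidx: "inj_on idx V" unfolding idx_def by (rule inj_on_inv_into[OF VA])
  have J1: "J \<subseteq> {1..m}" unfolding J_def using idx1 by auto
  have yH: "y \<in> affine hull V" using V(2) convex_hull_subset_affine_hull[of V] by auto
  define \<beta> where "\<beta> = bary V y"
  have b1: "sum \<beta> V = 1" "(\<Sum>v\<in>V. \<beta> v *\<^sub>R v) = y" using bary[OF Vb(1) yH] unfolding \<beta>_def by auto
  have b0: "\<And>v. v \<in> V \<Longrightarrow> \<beta> v \<ge> 0" unfolding \<beta>_def using V(2) by (simp add: bary_conv[OF Vb(2,1)])
  define x' where "x' = (\<lambda>j. if j \<in> J then \<beta> (a j) else 0)"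
  have x'1: "(\<Sum>j=1..m. x' j) = 1"
    unfolding x'_def using sum_reindex_support[OF J1 injidx J_def, of "\<lambda>j. \<beta> (a j)"] idx2 b1(1) by simp
  have x'2: "(\<Sum>j=1..m. x' j *\<^sub>R a j) = y"
  proof -
    have "(\<Sum>j=1..m. x' j *\<^sub>R a j) = (\<Sum>j=1..m. if j \<in> J then \<beta> (a j) *\<^sub>R a j else 0)"
      unfolding x'_def by (rule sum.cong) auto
    also have "\<dots> = (\<Sum>v\<in>V. \<beta> (a (idx v)) *\<^sub>R a (idx v))"
      by (rule sum_reindex_support[OF J1 injidx J_def])
    also have "\<dots> = (\<Sum>v\<in>V. \<beta> v *\<^sub>R v)" by (rule sum.cong) (auto simp: idx2)
    finally show ?thesis using b1(2) by simp
  qed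
  have x'0: "\<forall>j\<in>{1..m}. x' j \<ge> 0"
    unfolding x'_def J_def using b0 idx2 by auto
  have fx': "feasible_weights m a y x'" unfolding feasible_weights_def using x'1 x'2 x'0 by simp
  have ox': "objective m a y x' = r\<^sup>2 - (dist c y)\<^sup>2"
  proof -
    have "(\<Sum>j=1..m. x' j * G (a j)) = (\<Sum>j=1..m. if j \<in> J then \<beta> (a j) * G (a j) else 0)"
      unfolding x'_def by (rule sum.cong) auto
    also have "\<dots> = (\<Sum>v\<in>V. \<beta> (a (idx v)) * G (a (idx v)))"
      by (rule sum_reindex_support[OF J1 injidx J_def])
    also have "\<dots> = (\<Sum>v\<in>V. \<beta> v * r\<^sup>2)" by (rule sum.cong) (auto simp: idx2 G_def cr(2))
    also have "\<dots> = r\<^sup>2" using b1(1) by (simp add: sum_distrib_right[symmetric])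
    finally show ?thesis using ident[OF fx'] by simp
  qed
  have GA: "\<And>j. j \<in> {1..m} \<Longrightarrow> G (a j) \<ge> r\<^sup>2"
  proof -
    fix j assume "j \<in> {1..m}"
    then have "a j \<in> A" unfolding A_def by simp
    then have "r \<le> dist c (a j)" using cr(3) by simp
    then show "G (a j) \<ge> r\<^sup>2" unfolding G_def using r0 by (simp add: power_mono)
  qed
  have "(\<Sum>j=1..m. x j * G (a j)) \<le> r\<^sup>2" using xopt[OF fx'] ident[OF xf] ox' by simp
  then have "(\<Sum>j=1..m. x j * (G (a j) - r\<^sup>2)) \<le> 0"
    using xf1(2) by (simp add: right_diff_distrib sum_subtractf sum_distrib_right[symmetric])
  moreover have nn: "\<forall>j\<in>{1..m}. 0 \<le> x j * (G (a j) - r\<^sup>2)" using xf1(3) GA by simp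
  ultimately have "(\<Sum>j=1..m. x j * (G (a j) - r\<^sup>2)) = 0"
    using sum_nonneg[of "{1..m}" "\<lambda>j. x j * (G (a j) - r\<^sup>2)"] by simp
  then have z0: "\<forall>j\<in>{1..m}. x j * (G (a j) - r\<^sup>2) = 0"
    by (subst (asm) sum_nonneg_eq_0_iff) (use nn in auto)
  have onS: "\<And>j. j \<in> {1..m} \<Longrightarrow> x j \<noteq> 0 \<Longrightarrow> dist c (a j) = r"
  proof -
    fix j assume j: "j \<in> {1..m}" "x j \<noteq> 0"
    then have "x j * (G (a j) - r\<^sup>2) = 0" using z0 by blast
    then have "G (a j) - r\<^sup>2 = 0" using j(2) by simp
    then show "dist c (a j) = r" unfolding G_def using r0 by simp
  qed
  define Sx where "Sx = {a j | j. j \<in> {1..m} \<and> x j \<noteq> 0}"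
  show ?thesis
  proof (cases "Sx \<subseteq> V")
    case True
    have indS: "\<not> affine_dependent Sx" using affine_independent_subset[OF Vb(2) True] .
    define F where "F = convex hull Sx"
    have Ff: "F face_of convex hull V"
      unfolding F_def face_of_convex_hull_affine_independent[OF Vb(2)] using True by blast
    define Jx where "Jx = {j\<in>{1..m}. x j \<noteq> 0}"
    have e1: "(\<Sum>j\<in>Jx. x j) = 1"
    proof -
      have "(\<Sum>j\<in>Jx. x j) = (\<Sum>j\<in>{1..m}. x j)"
        unfolding Jx_def by (rule sum.mono_neutral_left) auto
      then show ?thesis using xf1(2) by simp
    qed
    have e2: "(\<Sum>j\<in>Jx. x j *\<^sub>R a j) = y"
    proof -
      have "(\<Sum>j\<in>Jx. x j *\<^sub>R a j) = (\<Sum>j\<in>{1..m}. x j *\<^sub>R a j)"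
        unfolding Jx_def by (rule sum.mono_neutral_left) auto
      then show ?thesis using xf1(1) by simp
    qed
    have yF: "y \<in> F"
    proof -
      have "(\<Sum>j\<in>Jx. x j *\<^sub>R a j) \<in> convex hull Sx"
        by (rule convex_sum) (use e1 xf1(3) in \<open>auto simp: Jx_def Sx_def intro: hull_inc\<close>)
      then show ?thesis using e2 unfolding F_def by simp
    qed
    have ext: "{v. v extreme_point_of F} = Sx"
      unfolding F_def using extreme_point_of_convex_hull_affine_independent[OF indS] by auto
    show ?thesis using T0 V(1) Ff yF ext unfolding A_def Sx_def by blast
  next
    case False
    then obtain j where j: "j \<in> {1..m}" "x j \<noteq> 0" "a j \<notin> V" unfolding Sx_def by auto
    define q where "q = a j"
    have qA: "q \<in> A" unfolding q_def A_def using j(1) by simp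
    have qV: "q \<notin> V" unfolding q_def using j(3) .
    have qS: "dist c q = r" unfolding q_def using onS j(1,2) by simp
    define N where "N = (\<lambda>p::'a. (norm p)\<^sup>2)"
    obtain f where f: "\<forall>U. is_cell A U \<longrightarrow> (\<forall>p\<in>A - U. interp f U p - f p \<noteq> 0)"
      using exists_generic[OF finA] by blast
    define c0 where "c0 = (\<lambda>(U, p). interp N U p - N p)"
    define c1 where "c1 = (\<lambda>(U, p). interp f U p - f p)"
    define X where "X = {(U, p). is_cell A U \<and> p \<in> A}"
    define Y where "Y = {(U, p). is_cell A U \<and> p \<in> A - U}"
    have "X \<subseteq> Pow A \<times> A" unfolding X_def is_cell_def by auto
    then have finX: "finite X" using finA by (simp add: finite_subset)
    have XY: "\<forall>z\<in>X. z \<in> Y \<longrightarrow> c1 z \<noteq> 0" unfolding Y_def c1_def using f by auto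
    obtain e where e: "e > 0" and eX: "\<forall>z\<in>X. (z \<in> Y \<longrightarrow> c0 z + e * c1 z \<noteq> 0 \<and> c0 z + (-e) * c1 z \<noteq> 0) \<and>
                      (c0 z > 0 \<longrightarrow> c0 z + e * c1 z > 0 \<and> c0 z + (-e) * c1 z > 0)"
      using exists_eps[OF finX XY] by blast
    have diff: "interp (\<lambda>q. N q + s * f q) U p - (N p + s * f p) = c0 (U, p) + s * c1 (U, p)" for s U p
      unfolding c0_def c1_def by (simp add: interp_lin algebra_simps)
    have del: "is_delaunay_triangulation A {U. is_cell A U \<and> lower (\<lambda>q. N q + s * f q) A U}"
      if s: "s = e \<or> s = -e" for s
    proof (rule regular_delaunay[OF finA neA _ _ T0])
      have sY: "\<And>z. z \<in> X \<Longrightarrow> z \<in> Y \<Longrightarrow> c0 z + s * c1 z \<noteq> 0" using eX s by auto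
      have sP: "\<And>z. z \<in> X \<Longrightarrow> c0 z > 0 \<Longrightarrow> c0 z + s * c1 z > 0" using eX s by auto
      show "generic (\<lambda>q. N q + s * f q) A"
        unfolding generic_def
      proof (intro allI impI ballI)
        fix U p assume U: "is_cell A U" and p: "p \<in> A - U"
        have "c0 (U, p) + s * c1 (U, p) \<noteq> 0" using sY[of "(U, p)"] U p unfolding X_def Y_def by auto
        then show "interp (\<lambda>q. N q + s * f q) U p \<noteq> N p + s * f p" using diff[of s U p] by auto
      qed
      show "lower (\<lambda>p. (norm p)\<^sup>2) A U" if U: "is_cell A U" "lower (\<lambda>q. N q + s * f q) A U" for U
        unfolding lower_def
      proof (rule ballI, rule ccontr)
        fix p assume p: "p \<in> A" and np: "\<not> interp (\<lambda>p. (norm p)\<^sup>2) U p \<le> (norm p)\<^sup>2"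
        have "c0 (U, p) > 0" using np unfolding c0_def N_def by simp
        then have "c0 (U, p) + s * c1 (U, p) > 0" using sP[of "(U, p)"] U(1) p unfolding X_def by auto
        then have "interp (\<lambda>q. N q + s * f q) U p > N p + s * f p" using diff[of s U p] by simp
        then show False using U(2) p unfolding lower_def by force
      qed
    qed
    have V1: "V \<in> {U. is_cell A U \<and> lower (\<lambda>q. N q + e * f q) A U}"
      using uniq[OF del[of e]] V(1) by simp
    have V2: "V \<in> {U. is_cell A U \<and> lower (\<lambda>q. N q + (-e) * f q) A U}"
      using uniq[OF del[of "-e"]] V(1) by simp
    have c00: "c0 (V, q) = 0"
    proof -
      define K where "K = r\<^sup>2 - c \<bullet> c"
      have NV: "\<And>v. dist c v = r \<Longrightarrow> N v = 2 * (c \<bullet> v) + K"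
        using sq_dist_affine[of _ c r] unfolding N_def K_def by (metis diff_self diff_zero power2_eq_iff_nonneg zero_le_dist r0)
      have qH: "q \<in> affine hull V" using Vb(6) qA by auto
      have "interp N V q = (\<Sum>v\<in>V. bary V q v * (2 * (c \<bullet> id v) + K))"
        unfolding interp_def by (rule sum.cong) (auto simp: NV cr(2))
      also have "\<dots> = 2 * (c \<bullet> q) + K"
        using affine_fun_sum[OF bary(1)[OF Vb(1) qH], of c id K] bary(2)[OF Vb(1) qH] by simp
      also have "\<dots> = N q" using NV[OF qS] by simp
      finally show ?thesis unfolding c0_def by simp
    qed
    have "c0 (V, q) + e * c1 (V, q) \<le> 0"
      using V1 qA diff[of e V q] unfolding lower_def by force
    moreover have "c0 (V, q) + (-e) * c1 (V, q) \<le> 0"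
      using V2 qA diff[of "-e" V q] unfolding lower_def by force
    moreover have "c0 (V, q) + e * c1 (V, q) \<noteq> 0"
      using eX Vc qA qV unfolding X_def Y_def by auto
    ultimately show ?thesis using c00 by simp
  qed
qed

end
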